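(* Let $\mathcal{C}$ be a category equipped with a faithful functor $Q:\mathcal{C}\to\mathbf{Set}$, and let $\Phi$ be a quasi-inner automorphism of $\mathcal{C}$, witnessed by a natural transformation $(\sigma_A:A\to\Phi(A))_{A\in\mathrm{Ob}\,\mathcal{C}}$ from the identity functor to $\Phi$ all of whose components are bimorphisms. If $\mu:A\to B$ and $\nu:\Phi(A)\to\Phi(B)$ are morphisms of $\mathcal{C}$ with $\sigma_B\circ\mu=\nu\circ\sigma_A$, then $\nu=\Phi(\mu)$. Consequently, for every morphism $\mu:A\to B$, $\Phi(\mu)$ is the unique morphism $\nu:\Phi(A)\to\Phi(B)$ such that $Q(\sigma_B)\circ Q(\mu)\circ (Q(\sigma_A))^{-1}\subseteq Q(\nu)$ (inclusion of relations), i.e. such that $Q(\nu)(Q(\sigma_A)(a))=Q(\sigma_B)(Q(\mu)(a))$ for all $a\in Q(A)$.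
   Context: A bimorphism is a morphism that is both a monomorphism and an epimorphism. An automorphism $\Phi$ of $\mathcal{C}$ is called quasi-inner if there exists a family of bimorphisms $\sigma_A:A\to\Phi(A)$, $A\in\mathrm{Ob}\,\mathcal{C}$, such that $\sigma_B\circ\mu=\Phi(\mu)\circ\sigma_A$ for every morphism $\mu:A\to B$ of $\mathcal{C}$. *)

theory Defs
  imports Main
begin

text \<open>A (small, explicitly carried) category: objects of type 'o, morphisms of type 'm.
  Comp g f denotes g after f.\<close>

record ('o, 'm) category =
  Obj  :: "'o set"
  Mor  :: "'m set"
  Dom  :: "'m \<Rightarrow> 'o"
  Cod  :: "'m \<Rightarrow> 'o"
  Comp :: "'m \<Rightarrow> 'm \<Rightarrow> 'm"
  Id   :: "'o \<Rightarrow> 'm"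

definition hom :: "('o, 'm) category \<Rightarrow> 'o \<Rightarrow> 'o \<Rightarrow> 'm set" where
  "hom C A B = {f \<in> Mor C. Dom C f = A \<and> Cod C f = B}"

definition is_category :: "('o, 'm) category \<Rightarrow> bool" where
  "is_category C \<longleftrightarrow>
     (\<forall>f \<in> Mor C. Dom C f \<in> Obj C \<and> Cod C f \<in> Obj C) \<and>
     (\<forall>A \<in> Obj C. Id C A \<in> hom C A A) \<and>
     (\<forall>f \<in> Mor C. \<forall>g \<in> Mor C. Cod C f = Dom C g \<longrightarrow>
         Comp C g f \<in> hom C (Dom C f) (Cod C g)) \<and>
     (\<forall>f \<in> Mor C. \<forall>g \<in> Mor C. \<forall>h \<in> Mor C.
         Cod C f = Dom C g \<longrightarrow> Cod C g = Dom C h \<longrightarrow>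
         Comp C h (Comp C g f) = Comp C (Comp C h g) f) \<and>
     (\<forall>f \<in> Mor C. Comp C (Id C (Cod C f)) f = f \<and> Comp C f (Id C (Dom C f)) = f)"

definition monomorphism :: "('o, 'm) category \<Rightarrow> 'm \<Rightarrow> bool" where
  "monomorphism C f \<longleftrightarrow> f \<in> Mor C \<and>
     (\<forall>g \<in> Mor C. \<forall>h \<in> Mor C. Cod C g = Dom C f \<longrightarrow> Cod C h = Dom C f \<longrightarrow>
        Dom C g = Dom C h \<longrightarrow> Comp C f g = Comp C f h \<longrightarrow> g = h)"

definition epimorphism :: "('o, 'm) category \<Rightarrow> 'm \<Rightarrow> bool" where
  "epimorphism C f \<longleftrightarrow> f \<in> Mor C \<and>
     (\<forall>g \<in> Mor C. \<forall>h \<in> Mor C. Dom C g = Cod C f \<longrightarrow> Dom C h = Cod C f \<longrightarrow>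
        Cod C g = Cod C h \<longrightarrow> Comp C g f = Comp C h f \<longrightarrow> g = h)"

definition bimorphism :: "('o, 'm) category \<Rightarrow> 'm \<Rightarrow> bool" where
  "bimorphism C f \<longleftrightarrow> monomorphism C f \<and> epimorphism C f"

definition endofunctor :: "('o, 'm) category \<Rightarrow> ('o \<Rightarrow> 'o) \<Rightarrow> ('m \<Rightarrow> 'm) \<Rightarrow> bool" where
  "endofunctor C Fo Fm \<longleftrightarrow>
     (\<forall>A \<in> Obj C. Fo A \<in> Obj C) \<and>
     (\<forall>f \<in> Mor C. Fm f \<in> hom C (Fo (Dom C f)) (Fo (Cod C f))) \<and>
     (\<forall>f \<in> Mor C. \<forall>g \<in> Mor C. Cod C f = Dom C g \<longrightarrow>
         Fm (Comp C g f) = Comp C (Fm g) (Fm f)) \<and>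
     (\<forall>A \<in> Obj C. Fm (Id C A) = Id C (Fo A))"

definition automorphism :: "('o, 'm) category \<Rightarrow> ('o \<Rightarrow> 'o) \<Rightarrow> ('m \<Rightarrow> 'm) \<Rightarrow> bool" where
  "automorphism C Fo Fm \<longleftrightarrow> endofunctor C Fo Fm \<and>
     bij_betw Fo (Obj C) (Obj C) \<and> bij_betw Fm (Mor C) (Mor C)"

definition quasi_inner_witness ::
  "('o, 'm) category \<Rightarrow> ('o \<Rightarrow> 'o) \<Rightarrow> ('m \<Rightarrow> 'm) \<Rightarrow> ('o \<Rightarrow> 'm) \<Rightarrow> bool" where
  "quasi_inner_witness C Fo Fm \<sigma> \<longleftrightarrow>
     (\<forall>A \<in> Obj C. \<sigma> A \<in> hom C A (Fo A) \<and> bimorphism C (\<sigma> A)) \<and>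
     (\<forall>\<mu> \<in> Mor C. Comp C (\<sigma> (Cod C \<mu>)) \<mu> = Comp C (Fm \<mu>) (\<sigma> (Dom C \<mu>)))"

definition quasi_inner :: "('o, 'm) category \<Rightarrow> ('o \<Rightarrow> 'o) \<Rightarrow> ('m \<Rightarrow> 'm) \<Rightarrow> bool" where
  "quasi_inner C Fo Fm \<longleftrightarrow> automorphism C Fo Fm \<and> (\<exists>\<sigma>. quasi_inner_witness C Fo Fm \<sigma>)"

text \<open>A functor Q : C \<rightarrow> Set, with sets of elements of a type 'x: QO A is the set Q(A),
  QM f is the function Q(f), considered only on QO (Dom f) (maps are identified
  extensionally on their domain).\<close>

definition set_functor :: "('o, 'm) category \<Rightarrow> ('o \<Rightarrow> 'x set) \<Rightarrow> ('m \<Rightarrow> 'x \<Rightarrow> 'x) \<Rightarrow> bool" where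
  "set_functor C QO QM \<longleftrightarrow>
     (\<forall>f \<in> Mor C. \<forall>x \<in> QO (Dom C f). QM f x \<in> QO (Cod C f)) \<and>
     (\<forall>f \<in> Mor C. \<forall>g \<in> Mor C. Cod C f = Dom C g \<longrightarrow>
         (\<forall>x \<in> QO (Dom C f). QM (Comp C g f) x = QM g (QM f x))) \<and>
     (\<forall>A \<in> Obj C. \<forall>x \<in> QO A. QM (Id C A) x = x)"

definition faithful_set_functor :: "('o, 'm) category \<Rightarrow> ('o \<Rightarrow> 'x set) \<Rightarrow> ('m \<Rightarrow> 'x \<Rightarrow> 'x) \<Rightarrow> bool" where
  "faithful_set_functor C QO QM \<longleftrightarrow> set_functor C QO QM \<and>
     (\<forall>A \<in> Obj C. \<forall>B \<in> Obj C. \<forall>f \<in> hom C A B. \<forall>g \<in> hom C A B.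
        (\<forall>x \<in> QO A. QM f x = QM g x) \<longrightarrow> f = g)"

end

theory Submission
  imports Defs
begin

theorem lemma1:
  fixes C :: "('o, 'm) category"
    and QO :: "'o \<Rightarrow> 'x set" and QM :: "'m \<Rightarrow> 'x \<Rightarrow> 'x"
    and Fo :: "'o \<Rightarrow> 'o" and Fm :: "'m \<Rightarrow> 'm" and \<sigma> :: "'o \<Rightarrow> 'm"
  assumes "is_category C"
    and "faithful_set_functor C QO QM"
    and "automorphism C Fo Fm"
    and "quasi_inner_witness C Fo Fm \<sigma>"
  shows "(\<forall>A B \<mu> \<nu>. \<mu> \<in> hom C A B \<longrightarrow> \<nu> \<in> hom C (Fo A) (Fo B) \<longrightarrow>
            Comp C (\<sigma> B) \<mu> = Comp C \<nu> (\<sigma> A) \<longrightarrow> \<nu> = Fm \<mu>)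
       \<and> (\<forall>A B \<mu>. \<mu> \<in> hom C A B \<longrightarrow>
            (\<exists>!\<nu>. \<nu> \<in> hom C (Fo A) (Fo B) \<and>
               (\<forall>a \<in> QO A. QM \<nu> (QM (\<sigma> A) a) = QM (\<sigma> B) (QM \<mu> a)))
            \<and> Fm \<mu> \<in> hom C (Fo A) (Fo B)
            \<and> (\<forall>a \<in> QO A. QM (Fm \<mu>) (QM (\<sigma> A) a) = QM (\<sigma> B) (QM \<mu> a)))"
proof -
  note cat = assms(1)[unfolded is_category_def]
  note fa = assms(2)[unfolded faithful_set_functor_def set_functor_def]
  note au = assms(3)[unfolded automorphism_def endofunctor_def]
  note qi = assms(4)[unfolded quasi_inner_witness_def]
  have P1: "\<nu> = Fm \<mu>" if h: "\<mu> \<in> hom C A B" "\<nu> \<in> hom C (Fo A) (Fo B)"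
      "Comp C (\<sigma> B) \<mu> = Comp C \<nu> (\<sigma> A)" for A B \<mu> \<nu>
  proof -
    have m: "\<mu> \<in> Mor C" "Dom C \<mu> = A" "Cod C \<mu> = B" using h(1) by (auto simp: hom_def)
    have AO: "A \<in> Obj C" using cat m by blast
    have s: "\<sigma> A \<in> hom C A (Fo A)" "epimorphism C (\<sigma> A)" using qi AO by (auto simp: bimorphism_def)
    have F: "Fm \<mu> \<in> hom C (Fo A) (Fo B)" using au m by auto
    have nat: "Comp C (\<sigma> B) \<mu> = Comp C (Fm \<mu>) (\<sigma> A)" using qi m by auto
    show ?thesis using s(2) F h(2) s(1) h(3) nat
      unfolding epimorphism_def hom_def by auto
  qed
  have P2: "(\<exists>!\<nu>. \<nu> \<in> hom C (Fo A) (Fo B) \<and>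
               (\<forall>a \<in> QO A. QM \<nu> (QM (\<sigma> A) a) = QM (\<sigma> B) (QM \<mu> a)))
            \<and> Fm \<mu> \<in> hom C (Fo A) (Fo B)
            \<and> (\<forall>a \<in> QO A. QM (Fm \<mu>) (QM (\<sigma> A) a) = QM (\<sigma> B) (QM \<mu> a))"
    if h: "\<mu> \<in> hom C A B" for A B \<mu>
  proof -
    have m: "\<mu> \<in> Mor C" "Dom C \<mu> = A" "Cod C \<mu> = B" using h(1) by (auto simp: hom_def)
    have AO: "A \<in> Obj C" and BO: "B \<in> Obj C" using cat m by blast+
    have sA: "\<sigma> A \<in> hom C A (Fo A)" using qi AO by auto
    have sB: "\<sigma> B \<in> hom C B (Fo B)" using qi BO by auto
    have F: "Fm \<mu> \<in> hom C (Fo A) (Fo B)" using au m by auto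
    have nat: "Comp C (\<sigma> B) \<mu> = Comp C (Fm \<mu>) (\<sigma> A)" using qi m by auto
    have QL: "QM (Comp C (\<sigma> B) \<mu>) a = QM (\<sigma> B) (QM \<mu> a)" if "a \<in> QO A" for a
      using fa m sB that unfolding hom_def by auto
    have QR: "QM (Comp C \<nu> (\<sigma> A)) a = QM \<nu> (QM (\<sigma> A) a)"
      if "a \<in> QO A" "\<nu> \<in> hom C (Fo A) (Fo B)" for a \<nu>
      using fa sA that unfolding hom_def by auto
    have ex: "\<forall>a \<in> QO A. QM (Fm \<mu>) (QM (\<sigma> A) a) = QM (\<sigma> B) (QM \<mu> a)"
      using QL QR[OF _ F] nat by metis
    have uniq: "\<nu> = Fm \<mu>" if "\<nu> \<in> hom C (Fo A) (Fo B)"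
        "\<forall>a \<in> QO A. QM \<nu> (QM (\<sigma> A) a) = QM (\<sigma> B) (QM \<mu> a)" for \<nu>
    proof -
      have c1: "Comp C (\<sigma> B) \<mu> \<in> hom C A (Fo B)" using cat m sB unfolding hom_def by auto
      have c2: "Comp C \<nu> (\<sigma> A) \<in> hom C A (Fo B)" using cat that(1) sA unfolding hom_def by auto
      have FBO: "Fo B \<in> Obj C" using au BO by auto
      have "\<forall>a \<in> QO A. QM (Comp C (\<sigma> B) \<mu>) a = QM (Comp C \<nu> (\<sigma> A)) a"
        using QL QR[OF _ that(1)] that(2) by metis
      then have "Comp C (\<sigma> B) \<mu> = Comp C \<nu> (\<sigma> A)" using fa AO FBO c1 c2 by blast
      then show ?thesis using P1 h that(1) by blast
    qed
    show ?thesis using F ex uniq by blast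
  qed
  show ?thesis using P1 P2 by blast
qed

end
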